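(* Let $(X,d)$ be a metric space and let $u\in F_{USCG}(X)$. Then $P_0(u)=P(u)$, and $P(u)$ is at most countable.
   Context: A fuzzy set on $X$ is a function $u:X\to[0,1]$, with $\alpha$-cuts $[u]_\alpha=\{x: u(x)\ge\alpha\}$ for $\alpha\in(0,1]$ and $[u]_0=\overline{\{u>0\}}$. $F_{USC}(X)$ is the set of fuzzy sets with all $\alpha$-cuts ($\alpha\in[0,1]$) non-empty and closed; $F_{USCG}(X)=\{u\in F_{USC}(X): [u]_\alpha \text{ is compact for all } \alpha\in(0,1]\}$. $H$ denotes the Hausdorff metric on non-empty closed subsets of $X$: $H(U,V)=\max\{\sup_{u\in U}d(u,V),\sup_{v\in V}d(v,U)\}$. A number $\alpha\in(0,1)$ is a platform point of $u$ if $\overline{\{u>\alpha\}}\subsetneqq[u]_\alpha$; $P(u)$ is the set of platform points of $u$. $P_0(u)=\{\alpha\in(0,1): \lim_{\beta\to\alpha}H([u]_\beta,[u]_\alpha)\neq 0\}$, i.e. the set of $\alpha\in(0,1)$ at which it is not the case that $H([u]_\beta,[u]_\alpha)\to0$ as $\beta\to\alpha$. *)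

theory Defs
  imports "HOL-Analysis.Analysis"
begin

definition fuzzy_set :: "('a \<Rightarrow> real) \<Rightarrow> bool" where
  "fuzzy_set u \<longleftrightarrow> (\<forall>x. 0 \<le> u x \<and> u x \<le> 1)"

definition cut :: "('a::topological_space \<Rightarrow> real) \<Rightarrow> real \<Rightarrow> 'a set" where
  "cut u \<alpha> = (if \<alpha> = 0 then closure {x. u x > 0} else {x. u x \<ge> \<alpha>})"

definition F_USC :: "('a::topological_space \<Rightarrow> real) \<Rightarrow> bool" where
  "F_USC u \<longleftrightarrow> fuzzy_set u \<and>
     (\<forall>\<alpha>\<in>{0..1}. cut u \<alpha> \<noteq> {} \<and> closed (cut u \<alpha>))"

definition F_USCG :: "('a::topological_space \<Rightarrow> real) \<Rightarrow> bool" where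
  "F_USCG u \<longleftrightarrow> F_USC u \<and> (\<forall>\<alpha>\<in>{0<..1}. compact (cut u \<alpha>))"

definition hausdorff :: "'a::metric_space set \<Rightarrow> 'a set \<Rightarrow> ereal" where
  "hausdorff U V = max (SUP x\<in>U. ereal (infdist x V)) (SUP y\<in>V. ereal (infdist y U))"

definition platform_points :: "('a::topological_space \<Rightarrow> real) \<Rightarrow> real set" where
  "platform_points u = {\<alpha>. 0 < \<alpha> \<and> \<alpha> < 1 \<and> closure {x. u x > \<alpha>} \<subset> cut u \<alpha>}"

definition P0 :: "('a::metric_space \<Rightarrow> real) \<Rightarrow> real set" where
  "P0 u = {\<alpha>. 0 < \<alpha> \<and> \<alpha> < 1 \<and>
      \<not> ((\<lambda>\<beta>. hausdorff (cut u \<beta>) (cut u \<alpha>)) \<longlongrightarrow> 0) (at \<alpha> within {0..1})}"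

end

theory Submission
  imports Defs
begin

lemma infdist_geI:
  assumes "A \<noteq> {}" "\<And>a. a \<in> A \<Longrightarrow> r \<le> dist x a"
  shows "r \<le> infdist x A"
  unfolding infdist_def using assms by (auto intro!: cInf_greatest)

lemma cut_pos: "0 < b \<Longrightarrow> cut u b = {x. b \<le> u x}"
  by (simp add: cut_def)

lemma cut_facts:
  assumes "F_USCG u" "0 < b" "b \<le> 1"
  shows "compact (cut u b)" "cut u b \<noteq> {}" "closed (cut u b)"
  using assms unfolding F_USCG_def F_USC_def by auto

lemma open_lt:
  assumes "F_USCG u" "0 < c" "c \<le> 1"
  shows "open {z. u z < c}"
proof -
  have "{z. u z < c} = - cut u c" using cut_pos[OF assms(2), of u] by auto
  then show ?thesis using cut_facts(3)[OF assms] by auto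
qed

lemma haus_nonneg:
  assumes "U \<noteq> {}"
  shows "0 \<le> hausdorff U V"
proof -
  obtain x where "x \<in> U" using assms by auto
  have "(0::ereal) \<le> ereal (infdist x V)" using infdist_nonneg by simp
  also have "\<dots> \<le> (SUP x\<in>U. ereal (infdist x V))" using \<open>x \<in> U\<close> by (rule SUP_upper)
  finally show ?thesis unfolding hausdorff_def by (rule order_trans[OF _ max.cobounded1])
qed

lemma haus_le:
  assumes "\<And>x. x \<in> U \<Longrightarrow> infdist x V \<le> e" "\<And>y. y \<in> V \<Longrightarrow> infdist y U \<le> e"
  shows "hausdorff U V \<le> ereal e"
  unfolding hausdorff_def using assms by (auto intro!: SUP_least)

lemma right_side:
  assumes F: "F_USCG u" and a: "0 < a" "a < 1" and np: "closure {x. u x > a} = cut u a"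
    and e: "0 < e"
  shows "\<exists>g>a. g \<le> 1 \<and> (\<forall>b. a < b \<and> b < g \<longrightarrow> hausdorff (cut u b) (cut u a) \<le> ereal e)"
proof -
  let ?C = "cut u a"
  have cpt: "compact ?C" using cut_facts[OF F a(1)] a by auto
  have "\<forall>x\<in>?C. \<exists>y. a < u y \<and> dist y x < e/3"
  proof
    fix x assume "x \<in> ?C"
    then have "x \<in> closure {x. u x > a}" using np by simp
    then show "\<exists>y. a < u y \<and> dist y x < e/3" unfolding closure_approachable using e
      by (metis (mono_tags, lifting) divide_pos_pos mem_Collect_eq zero_less_numeral)
  qed
  then obtain f where f: "\<And>x. x \<in> ?C \<Longrightarrow> a < u (f x) \<and> dist (f x) x < e/3" by metis
  have "?C \<subseteq> \<Union> ((\<lambda>x. ball x (e/3)) ` ?C)" using e by auto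
  then obtain K where K: "K \<subseteq> ?C" "finite K" "?C \<subseteq> \<Union> ((\<lambda>x. ball x (e/3)) ` K)"
    using compactE_image[OF cpt, of ?C "\<lambda>x. ball x (e/3)"] by auto
  define g where "g = Min (insert 1 ((\<lambda>x. u (f x)) ` K))"
  have gfin: "finite (insert 1 ((\<lambda>x. u (f x)) ` K))" using K by auto
  have ga: "a < g" unfolding g_def using gfin a K f by (auto simp: Min_gr_iff)
  have g1: "g \<le> 1" unfolding g_def using gfin by auto
  have gk: "\<And>k. k \<in> K \<Longrightarrow> g \<le> u (f k)" unfolding g_def using gfin by auto
  show ?thesis
  proof (intro exI conjI allI impI)
    fix b assume b: "a < b \<and> b < g"
    have b0: "0 < b" using a b by auto
    have sub: "cut u b \<subseteq> ?C" using b a by (auto simp: cut_pos)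
    show "hausdorff (cut u b) (cut u a) \<le> ereal e"
    proof (rule haus_le)
      fix y assume "y \<in> cut u b"
      then have "y \<in> ?C" using sub by auto
      then show "infdist y ?C \<le> e" using e by (simp add: infdist_zero)
    next
      fix x assume x: "x \<in> ?C"
      then obtain k where k: "k \<in> K" "dist k x < e/3" using K(3) by (auto simp: dist_commute)
      have kc: "k \<in> ?C" using k K by auto
      have "f k \<in> cut u b" using gk[OF k(1)] b b0 by (auto simp: cut_pos)
      then have "infdist x (cut u b) \<le> dist x (f k)" by (rule infdist_le)
      also have "\<dots> \<le> dist x k + dist k (f k)" by (rule dist_triangle)
      also have "\<dots> \<le> e"
      proof -
        have "dist x k < e/3" "dist k (f k) < e/3" using k f[OF kc] by (auto simp: dist_commute)
        then show ?thesis using e by argo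
      qed
      finally show "infdist x (cut u b) \<le> e" .
    qed
  qed (use ga g1 in auto)
qed


lemma left_side:
  assumes F: "F_USCG u" and a: "0 < a" "a < 1" and e: "0 < e"
  shows "\<exists>b0. 0 < b0 \<and> b0 < a \<and> (\<forall>b. b0 < b \<and> b < a \<longrightarrow> hausdorff (cut u b) (cut u a) \<le> ereal e)"
proof -
  let ?C = "cut u a"
  define K0 where "K0 = cut u (a/2)"
  have K0c: "compact K0" unfolding K0_def using cut_facts[OF F] a by auto
  define T where "T = K0 \<inter> {y. e \<le> infdist y ?C}"
  have "closed {y. e \<le> infdist y ?C}"
    by (intro closed_Collect_le continuous_intros)
  then have Tc: "compact T" unfolding T_def using K0c by (rule compact_Int_closed[rotated])
  have Tu: "\<And>y. y \<in> T \<Longrightarrow> a/2 \<le> u y \<and> u y < a"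
  proof -
    fix y assume y: "y \<in> T"
    then have h: "a/2 \<le> u y" unfolding T_def K0_def using a by (auto simp: cut_pos)
    have "u y < a"
    proof (rule ccontr)
      assume "\<not> u y < a"
      then have "y \<in> ?C" using a by (auto simp: cut_pos)
      then have "infdist y ?C = 0" by (rule infdist_zero)
      then show False using y e unfolding T_def by auto
    qed
    then show "a/2 \<le> u y \<and> u y < a" using h by auto
  qed
  have opn: "\<And>y. y \<in> T \<Longrightarrow> open {z. u z < (u y + a)/2}"
    proof -
    fix y assume "y \<in> T" then have "a/2 \<le> u y \<and> u y < a" by (rule Tu)
    then show "open {z. u z < (u y + a)/2}" using a by (intro open_lt[OF F]) auto
  qed
  have "T \<subseteq> \<Union> ((\<lambda>y. {z. u z < (u y + a)/2}) ` T)" using Tu by fastforce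
  then obtain K where K: "K \<subseteq> T" "finite K" "T \<subseteq> \<Union> ((\<lambda>y. {z. u z < (u y + a)/2}) ` K)"
    using compactE_image[OF Tc, of T "\<lambda>y. {z. u z < (u y + a)/2}"] opn by metis
  define b0 where "b0 = Max (insert (a/2) ((\<lambda>y. (u y + a)/2) ` K))"
  have fin: "finite (insert (a/2) ((\<lambda>y. (u y + a)/2) ` K))" using K by auto
  have b0a: "b0 < a" unfolding b0_def using fin a K Tu by (auto simp: Max_less_iff)
  have b0p: "a/2 \<le> b0" unfolding b0_def using fin by (intro Max_ge) auto
  have b0k: "\<And>k. k \<in> K \<Longrightarrow> (u k + a)/2 \<le> b0" unfolding b0_def using fin by (intro Max_ge) auto
  have key: "\<And>y. b0 \<le> u y \<Longrightarrow> infdist y ?C \<le> e"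
  proof (rule ccontr)
    fix y assume y: "b0 \<le> u y" and n: "\<not> infdist y ?C \<le> e"
    have "y \<in> T" unfolding T_def K0_def using y n b0p a by (auto simp: cut_pos)
    then obtain k where "k \<in> K" "u y < (u k + a)/2" using K(3) by auto
    then show False using b0k y by force
  qed
  show ?thesis
  proof (intro exI conjI allI impI)
    fix b assume b: "b0 < b \<and> b < a"
    have b0: "0 < b" using a b b0p by auto
    have sub: "?C \<subseteq> cut u b" using b a b0 by (auto simp: cut_pos)
    show "hausdorff (cut u b) (cut u a) \<le> ereal e"
    proof (rule haus_le)
      fix y assume "y \<in> cut u b"
      then show "infdist y ?C \<le> e" using b b0 key by (auto simp: cut_pos)
    next
      fix x assume "x \<in> ?C"
      then show "infdist x (cut u b) \<le> e" using sub e by (simp add: infdist_zero subsetD)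
    qed
  qed (use b0a b0p a in auto)
qed


lemma np_tendsto:
  assumes F: "F_USCG u" and a: "0 < a" "a < 1" and np: "closure {x. u x > a} = cut u a"
  shows "((\<lambda>b. hausdorff (cut u b) (cut u a)) \<longlongrightarrow> 0) (at a within {0..1})"
proof -
  have ev: "eventually (\<lambda>b. 0 \<le> hausdorff (cut u b) (cut u a) \<and> hausdorff (cut u b) (cut u a) \<le> ereal e)
     (at a within {0..1})" if e: "0 < e" for e
  proof -
    obtain g where g: "a < g" "g \<le> 1" "\<And>b. a < b \<and> b < g \<Longrightarrow> hausdorff (cut u b) (cut u a) \<le> ereal e"
      using right_side[OF F a np e] by blast
    obtain b0 where b0: "0 < b0" "b0 < a" "\<And>b. b0 < b \<and> b < a \<Longrightarrow> hausdorff (cut u b) (cut u a) \<le> ereal e"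
      using left_side[OF F a e] by blast
    show ?thesis unfolding eventually_at
    proof (intro exI[of _ "min (a - b0) (g - a)"] conjI ballI impI)
      show "0 < min (a - b0) (g - a)" using g b0 by auto
    next
      fix b :: real assume b: "b \<in> {0..1}" "b \<noteq> a \<and> dist b a < min (a - b0) (g - a)"
      then have bb: "b0 < b" "b < g" by (auto simp: dist_real_def)
      have "cut u b \<noteq> {}" using cut_facts(2)[OF F] bb b0 g by auto
      then show "0 \<le> hausdorff (cut u b) (cut u a)" by (rule haus_nonneg)
      show "hausdorff (cut u b) (cut u a) \<le> ereal e"
        using b bb b0(3) g(3) by (cases "b < a") auto
    qed
  qed
  show ?thesis
  proof (rule order_tendstoI)
    fix c :: ereal assume c: "c < 0"
    have ev1: "eventually (\<lambda>b. 0 \<le> hausdorff (cut u b) (cut u a) \<and> hausdorff (cut u b) (cut u a) \<le> ereal 1)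
     (at a within {0..1})" using ev[of 1] by simp
    show "eventually (\<lambda>b. c < hausdorff (cut u b) (cut u a)) (at a within {0..1})"
    proof (rule eventually_mono[OF ev1])
      fix b assume "0 \<le> hausdorff (cut u b) (cut u a) \<and> hausdorff (cut u b) (cut u a) \<le> ereal 1"
      then show "c < hausdorff (cut u b) (cut u a)" using c by auto
    qed
  next
    fix c :: ereal assume "0 < c"
    then obtain z where z: "0 < ereal z" "ereal z < c" using ereal_dense2 by blast
    have evz: "eventually (\<lambda>b. 0 \<le> hausdorff (cut u b) (cut u a) \<and> hausdorff (cut u b) (cut u a) \<le> ereal z)
     (at a within {0..1})" using ev[of z] z by simp
    show "eventually (\<lambda>b. hausdorff (cut u b) (cut u a) < c) (at a within {0..1})"
    proof (rule eventually_mono[OF evz])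
      fix b assume "0 \<le> hausdorff (cut u b) (cut u a) \<and> hausdorff (cut u b) (cut u a) \<le> ereal z"
      then show "hausdorff (cut u b) (cut u a) < c" using z by auto
    qed
  qed
qed

lemma platform_not_tendsto:
  assumes F: "F_USCG u" and p: "a \<in> platform_points u"
  shows "\<not> ((\<lambda>b. hausdorff (cut u b) (cut u a)) \<longlongrightarrow> 0) (at a within {0..1})"
proof
  assume T: "((\<lambda>b. hausdorff (cut u b) (cut u a)) \<longlongrightarrow> 0) (at a within {0..1})"
  have a: "0 < a" "a < 1" using p unfolding platform_points_def by auto
  obtain x0 where x0: "x0 \<in> cut u a" "x0 \<notin> closure {x. u x > a}"
    using p unfolding platform_points_def by auto
  then obtain r where r: "r > 0" "\<And>y. a < u y \<Longrightarrow> r \<le> dist y x0"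
    unfolding closure_approachable by (metis linorder_not_le mem_Collect_eq)
  have ge: "ereal r \<le> hausdorff (cut u b) (cut u a)" if b: "a < b" "b \<le> 1" for b
  proof -
    have "r \<le> infdist x0 (cut u b)"
    proof (rule infdist_geI)
      show "cut u b \<noteq> {}" using cut_facts(2)[OF F] a b by auto
    next
      fix y assume "y \<in> cut u b"
      then have "a < u y" using a b by (auto simp: cut_pos)
      then show "r \<le> dist x0 y" using r(2)[of y] by (metis dist_commute)
    qed
    then have "ereal r \<le> ereal (infdist x0 (cut u b))" by simp
    also have "\<dots> \<le> (SUP x\<in>cut u a. ereal (infdist x (cut u b)))" using x0(1) by (rule SUP_upper)
    finally show ?thesis unfolding hausdorff_def by (rule order_trans[OF _ max.cobounded2])
  qed
  have "eventually (\<lambda>b. hausdorff (cut u b) (cut u a) < ereal r) (at a within {0..1})"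
    using order_tendstoD(2)[OF T] r by auto
  then obtain d where d: "d > 0" "\<And>b. b \<in> {0..1} \<Longrightarrow> b \<noteq> a \<and> dist b a < d \<Longrightarrow> hausdorff (cut u b) (cut u a) < ereal r"
    unfolding eventually_at by blast
  define b where "b = min 1 (a + d/2)"
  have "a < b" "b \<le> 1" using a d unfolding b_def by auto
  moreover have "hausdorff (cut u b) (cut u a) < ereal r"
    using d a unfolding b_def by (intro d(2)) (auto simp: dist_real_def)
  ultimately show False using ge by (meson leD)
qed


lemma platform_countable:
  fixes u :: "'a::metric_space \<Rightarrow> real"
  assumes F: "F_USCG u"
  shows "countable (platform_points u)"
proof -
  let ?P = "platform_points u"
  have ex: "\<forall>a\<in>?P. \<exists>xr. u (fst xr) = a \<and> snd xr > 0 \<and> (\<forall>y. a < u y \<longrightarrow> snd xr \<le> dist y (fst xr))"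
  proof
    fix a assume p: "a \<in> ?P"
    have a: "0 < a" "a < 1" using p unfolding platform_points_def by auto
    obtain x0 where x0: "x0 \<in> cut u a" "x0 \<notin> closure {x. u x > a}"
      using p unfolding platform_points_def by auto
    then obtain r where r: "r > 0" "\<And>y. a < u y \<Longrightarrow> r \<le> dist y x0"
      unfolding closure_approachable by (metis linorder_not_le mem_Collect_eq)
    have "u x0 = a"
    proof -
      have "a \<le> u x0" using x0(1) a by (simp add: cut_pos)
      moreover have "\<not> a < u x0" using x0(2) closure_subset[of "{x. a < u x}"] by auto
      ultimately show ?thesis by simp
    qed
    then show "\<exists>xr. u (fst xr) = a \<and> snd xr > 0 \<and> (\<forall>y. a < u y \<longrightarrow> snd xr \<le> dist y (fst xr))"
      using r by (intro exI[of _ "(x0, r)"]) auto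
  qed
  obtain XR where XR: "\<And>a. a \<in> ?P \<Longrightarrow> u (fst (XR a)) = a \<and> snd (XR a) > 0 \<and> (\<forall>y. a < u y \<longrightarrow> snd (XR a) \<le> dist y (fst (XR a)))"
    using bchoice[OF ex] by blast
  define X where "X a = fst (XR a)" for a
  define R where "R a = snd (XR a)" for a
  have X: "\<And>a. a \<in> ?P \<Longrightarrow> u (X a) = a" and Rp: "\<And>a. a \<in> ?P \<Longrightarrow> R a > 0"
    and Rs: "\<And>a y. a \<in> ?P \<Longrightarrow> a < u y \<Longrightarrow> R a \<le> dist y (X a)"
    using XR unfolding X_def R_def by auto
  define Q where "Q n m = {a\<in>?P. inverse (real (Suc n)) \<le> a \<and> inverse (real (Suc m)) \<le> R a}" for n m
  have fin: "finite (Q n m)" for n m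
  proof -
    define c where "c = inverse (real (Suc n))"
    define d where "d = inverse (real (Suc m))"
    have c: "0 < c" "c \<le> 1" unfolding c_def by (auto simp: field_simps)
    have d: "0 < d" unfolding d_def by auto
    let ?KC = "cut u c"
    have cpt: "compact ?KC" using cut_facts(1)[OF F c] .
    have "?KC \<subseteq> \<Union> ((\<lambda>x. ball x (d/2)) ` ?KC)" using d by auto
    then obtain K where K: "K \<subseteq> ?KC" "finite K" "?KC \<subseteq> \<Union> ((\<lambda>x. ball x (d/2)) ` K)"
      using compactE_image[OF cpt, of ?KC "\<lambda>x. ball x (d/2)"] by auto
    have ex2: "\<forall>a\<in>Q n m. \<exists>k. k \<in> K \<and> X a \<in> ball k (d/2)"
    proof
      fix a assume a: "a \<in> Q n m"
      then have "X a \<in> ?KC" using X c unfolding Q_def c_def by (auto simp: cut_pos)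
      then have "X a \<in> \<Union> ((\<lambda>x. ball x (d/2)) ` K)" using K(3) by blast
      then show "\<exists>k. k \<in> K \<and> X a \<in> ball k (d/2)" by blast
    qed
    obtain h where h: "\<And>a. a \<in> Q n m \<Longrightarrow> h a \<in> K \<and> X a \<in> ball (h a) (d/2)"
      using bchoice[OF ex2] by blast
    have sep: "dist (X a') (X a) \<ge> d" if "a \<in> Q n m" "a' \<in> Q n m" "a < a'" for a a'
    proof -
      have "a < u (X a')" using X that unfolding Q_def by auto
      then have "R a \<le> dist (X a') (X a)" using Rs that unfolding Q_def by auto
      then show ?thesis using that unfolding Q_def d_def by auto
    qed
    have "inj_on h (Q n m)"
    proof (rule inj_onI)
      fix a a' assume aa: "a \<in> Q n m" "a' \<in> Q n m" "h a = h a'"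
      have "dist (X a) (h a) < d/2" using h[OF aa(1)] by (simp add: dist_commute)
      moreover have "dist (X a') (h a') < d/2" using h[OF aa(2)] by (simp add: dist_commute)
      ultimately have "dist (X a) (h a) < d/2" "dist (X a') (h a) < d/2" using aa(3) by auto
      then have lt: "dist (X a') (X a) < d" "dist (X a) (X a') < d"
        using dist_triangle_half_l by blast+
      show "a = a'"
      proof (rule ccontr)
        assume "a \<noteq> a'"
        then have "a < a' \<or> a' < a" by auto
        then show False
        proof
          assume "a < a'" then show False using sep[OF aa(1,2)] lt(1) by linarith
        next
          assume "a' < a" then show False using sep[OF aa(2,1)] lt(2) by linarith
        qed
      qed
    qed
    moreover have "h ` Q n m \<subseteq> K" using h by auto
    ultimately show ?thesis using K(2) by (rule inj_on_finite)
  qed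
  have "?P \<subseteq> (\<Union>nm. Q (fst nm) (snd nm))"
  proof
    fix a assume a: "a \<in> ?P"
    then have "0 < a" unfolding platform_points_def by auto
    then obtain n where n: "inverse (real (Suc n)) < a" using reals_Archimedean by blast
    obtain m where m: "inverse (real (Suc m)) < R a" using reals_Archimedean Rp[OF a] by blast
    show "a \<in> (\<Union>nm. Q (fst nm) (snd nm))" using a n m unfolding Q_def
      by (intro UN_I[of "(n, m)"]) auto
  qed
  moreover have "countable (\<Union>nm. Q (fst nm) (snd nm))"
    using fin by (intro countable_UN) (auto intro: countable_finite)
  ultimately show ?thesis by (rule countable_subset)
qed

theorem lemma3p5:
  fixes u :: "'a::metric_space \<Rightarrow> real"
  assumes "F_USCG u"
  shows "P0 u = platform_points u \<and> countable (platform_points u)"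
proof
  show "countable (platform_points u)" using platform_countable[OF assms] .
  show "P0 u = platform_points u"
  proof
    show "platform_points u \<subseteq> P0 u"
    proof
      fix a assume p: "a \<in> platform_points u"
      then show "a \<in> P0 u" using platform_not_tendsto[OF assms p]
        unfolding P0_def platform_points_def by auto
    qed
  next
    show "P0 u \<subseteq> platform_points u"
    proof
      fix a assume p: "a \<in> P0 u"
      then have a: "0 < a" "a < 1" unfolding P0_def by auto
      show "a \<in> platform_points u"
      proof (rule ccontr)
        assume np: "a \<notin> platform_points u"
        have "closure {x. u x > a} \<subseteq> cut u a"
        proof (rule closure_minimal)
          show "{x. u x > a} \<subseteq> cut u a" using a by (auto simp: cut_pos)
          show "closed (cut u a)" using cut_facts(3)[OF assms] a by auto
        qed
        then have "closure {x. u x > a} = cut u a" using np a unfolding platform_points_def by auto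
        then have "((\<lambda>b. hausdorff (cut u b) (cut u a)) \<longlongrightarrow> 0) (at a within {0..1})"
          using np_tendsto[OF assms a] by simp
        then show False using p unfolding P0_def by auto
      qed
    qed
  qed
qed

end
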